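(* Let $d\in\mathbb Z^+$ and define $\mathbb P_{\boldsymbol 0}:=1$, $\mathbb P_{\boldsymbol m}:=\frac{(|\boldsymbol m|+d)!}{\boldsymbol m!\,d!}+\sum_{\boldsymbol w\le\boldsymbol m,\,\boldsymbol w\ne\boldsymbol m}\mathbb P_{\boldsymbol w}(|\boldsymbol m|-|\boldsymbol w|+1)!$ for $\boldsymbol m\in\mathscr F\setminus\{\boldsymbol 0\}$. Let $\tau_0:=1$, $\tau_k:=\sum_{j=0}^{k-1}(k-j+1)\tau_j$ for $k\ge1$. Then $$\mathbb P_{\boldsymbol m}\le\frac{2\,\tau_{|\boldsymbol m|}\,(|\boldsymbol m|+d-1)!}{(d-1)!}\qquad\text{for all }\boldsymbol m\in\mathscr F\setminus\{\boldsymbol 0\}.$$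
   Context: $\mathscr F$ is the set of finitely supported multi-indices in $\mathbb N_0^{\mathbb N}$; $|\boldsymbol m|=\sum m_j$, $\boldsymbol m!=\prod m_j!$, componentwise order. *)

theory Defs
  imports Complex_Main
begin

text \<open>Multi-indices: functions nat => nat with finite support (the set F).
  Componentwise order is the pointwise order on functions.\<close>

definition msupp :: "(nat \<Rightarrow> nat) \<Rightarrow> nat set" where
  "msupp m = {j. m j \<noteq> 0}"

definition fin_multi_index :: "(nat \<Rightarrow> nat) \<Rightarrow> bool" where
  "fin_multi_index m \<longleftrightarrow> finite (msupp m)"

definition mabs :: "(nat \<Rightarrow> nat) \<Rightarrow> nat" where
  "mabs m = (\<Sum>j\<in>msupp m. m j)"

definition mfact :: "(nat \<Rightarrow> nat) \<Rightarrow> nat" where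
  "mfact m = (\<Prod>j\<in>msupp m. fact (m j))"

lemma mabs_less:
  assumes "fin_multi_index m" "w \<le> m" "w \<noteq> m"
  shows "mabs w < mabs m"
proof -
  have sub: "msupp w \<subseteq> msupp m"
    using assms(2) unfolding msupp_def le_fun_def by (auto simp: le_fun_def) (metis less_le_trans)
  have fin: "finite (msupp m)" using assms(1) by (simp add: fin_multi_index_def)
  have "mabs w = (\<Sum>j\<in>msupp m. w j)"
    unfolding mabs_def
    by (rule sum.mono_neutral_left[OF fin sub]) (auto simp: msupp_def)
  moreover obtain i where i: "w i \<noteq> m i" using assms(3) by auto
  then have "w i < m i" using assms(2) by (simp add: le_fun_def order_le_neq_trans)
  then have "i \<in> msupp m" by (auto simp: msupp_def)
  have "(\<Sum>j\<in>msupp m. w j) < (\<Sum>j\<in>msupp m. m j)"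
    by (rule sum_strict_mono_ex1[OF fin])
       (use assms(2) \<open>i \<in> msupp m\<close> \<open>w i < m i\<close> in \<open>auto simp: le_fun_def\<close>)
  ultimately show ?thesis by (simp add: mabs_def)
qed

function PP :: "nat \<Rightarrow> (nat \<Rightarrow> nat) \<Rightarrow> real" where
  "PP d m =
     (if m = (\<lambda>_. 0) then 1
      else if \<not> fin_multi_index m then 0
      else fact (mabs m + d) / (real (mfact m) * fact d)
           + (\<Sum>w\<in>{w. w \<le> m \<and> w \<noteq> m}. PP d w * fact (mabs m - mabs w + 1)))"
  by auto
termination
  by (relation "measure (\<lambda>(d, m). mabs m)") (auto intro: mabs_less)

fun tau :: "nat \<Rightarrow> nat" where
  "tau 0 = 1"
| "tau (Suc k) = (\<Sum>j<Suc k. (Suc k - j + 1) * tau j)"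

end

theory Submission
  imports Defs
begin

definition emb :: "(nat \<Rightarrow> nat) \<Rightarrow> (nat \<times> nat) set" where
  "emb w = {(i,k). k < w i}"

lemma emb_Sigma: "emb w = (SIGMA i:msupp w. {..<w i})"
  by (auto simp: emb_def msupp_def)

lemma emb_inj: "inj emb"
proof (rule injI)
  fix w v :: "nat \<Rightarrow> nat" assume e: "emb w = emb v"
  show "w = v"
  proof
    fix i
    have m: "\<And>u k. (i, k) \<in> emb u \<longleftrightarrow> k < u i" by (simp add: emb_def)
    have "\<And>k. k < w i \<longleftrightarrow> k < v i" using e m by blast
    then show "w i = v i" by (meson less_irrefl nat_neq_iff)
  qed
qed

lemma emb_mono: "w \<le> m \<Longrightarrow> emb w \<subseteq> emb m"
  by (auto simp: emb_def le_fun_def intro: less_le_trans)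

lemma fin_emb: "fin_multi_index w \<Longrightarrow> finite (emb w)"
  unfolding emb_Sigma fin_multi_index_def by auto

lemma card_emb: "fin_multi_index w \<Longrightarrow> card (emb w) = mabs w"
  unfolding emb_Sigma fin_multi_index_def mabs_def by simp

lemma fin_le: "w \<le> m \<Longrightarrow> fin_multi_index m \<Longrightarrow> fin_multi_index w"
proof -
  assume a: "w \<le> m" "fin_multi_index m"
  have "msupp w \<subseteq> msupp m"
  proof
    fix j assume "j \<in> msupp w"
    then have "w j \<noteq> 0" by (simp add: msupp_def)
    moreover have "w j \<le> m j" using a(1) by (simp add: le_fun_def)
    ultimately show "j \<in> msupp m" by (simp add: msupp_def)
  qed
  then show ?thesis using a(2) finite_subset unfolding fin_multi_index_def by blast
qed

lemma finite_below:
  assumes "fin_multi_index m"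
  shows "finite {w. w \<le> m}"
proof -
  have "emb ` {w. w \<le> m} \<subseteq> Pow (emb m)" using emb_mono by auto
  then have "finite (emb ` {w. w \<le> m})" using fin_emb[OF assms] finite_subset by blast
  moreover have "inj_on emb {w. w \<le> m}" using emb_inj by (rule inj_on_subset) simp
  ultimately show ?thesis using finite_imageD by blast
qed

lemma card_level:
  assumes "fin_multi_index m"
  shows "card {w. w \<le> m \<and> P w \<and> mabs w = j} \<le> mabs m choose j"
proof -
  let ?S = "{w. w \<le> m \<and> P w \<and> mabs w = j}"
  let ?T = "{B. B \<subseteq> emb m \<and> card B = j}"
  have sub: "emb ` ?S \<subseteq> ?T"
  proof
    fix B assume "B \<in> emb ` ?S"
    then obtain w where w: "w \<le> m" "mabs w = j" and B: "B = emb w" by blast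
    have "fin_multi_index w" using fin_le[OF w(1) assms] .
    then have "card B = j" using card_emb w(2) B by simp
    moreover have "B \<subseteq> emb m" using emb_mono[OF w(1)] B by simp
    ultimately show "B \<in> ?T" by simp
  qed
  have inj: "inj_on emb ?S" using emb_inj by (rule inj_on_subset) simp
  have fin: "finite ?T" using fin_emb[OF assms] by simp
  have "card ?S = card (emb ` ?S)" using card_image[OF inj] by simp
  also have "\<dots> \<le> card ?T" by (rule card_mono[OF fin sub])
  also have "\<dots> = card (emb m) choose j" by (rule n_subsets[OF fin_emb[OF assms]])
  also have "\<dots> = mabs m choose j" by (simp add: card_emb[OF assms])
  finally show ?thesis .
qed

lemma fact_ineq: "j \<le> n \<Longrightarrow> fact n * fact (j + e) \<le> (fact (n + e) * fact j :: nat)"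
proof (induction n rule: dec_induct)
  case base then show ?case by (simp add: add.commute mult.commute)
next
  case (step n)
  have "fact (Suc n) * fact (j + e) = Suc n * (fact n * fact (j + e))" by (simp add: algebra_simps)
  also have "\<dots> \<le> Suc n * (fact (n + e) * fact j)" by (rule mult_le_mono2) (use step in simp)
  also have "\<dots> \<le> Suc (n + e) * (fact (n + e) * fact j)" by simp
  also have "\<dots> = fact (Suc n + e) * fact j" by (simp add: algebra_simps)
  finally show ?case .
qed

lemma choose_ineq:
  assumes "j \<le> n"
  shows "(n choose j) * fact (j + e) * fact (n - j + 1) \<le> (n - j + 1) * (fact (n + e) :: nat)"
proof -
  have f: "fact j * fact (n - j) * (n choose j) = (fact n :: nat)" using binomial_fact_lemma[OF assms] .
  have "fact j * ((n choose j) * fact (j + e) * fact (n - j + 1))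
      = (n - j + 1) * (fact j * fact (n - j) * (n choose j)) * fact (j + e)"
    by (simp add: algebra_simps)
  also have "\<dots> = (n - j + 1) * (fact n * fact (j + e))" unfolding f by (simp only: mult.assoc)
  also have "\<dots> \<le> (n - j + 1) * (fact (n + e) * fact j)" by (rule mult_le_mono2) (rule fact_ineq[OF assms])
  also have "\<dots> = fact j * ((n - j + 1) * fact (n + e))" by (simp add: algebra_simps)
  finally show ?thesis by (simp add: mult_le_cancel1)
qed

lemma emb_zero: "fin_multi_index w \<Longrightarrow> mabs w = 0 \<Longrightarrow> w = (\<lambda>_. 0)"
proof -
  assume a: "fin_multi_index w" "mabs w = 0"
  then have "emb w = {}" using card_emb fin_emb by fastforce
  moreover have "emb (\<lambda>_. 0) = {}" by (simp add: emb_def)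
  ultimately show ?thesis using emb_inj by (metis injD)
qed

lemma mabs_zero: "mabs (\<lambda>_. 0) = 0"
  by (simp add: mabs_def msupp_def)

lemma PP_zero: "PP d (\<lambda>_. 0) = 1"
  by (subst PP.simps) simp

lemma PP_unfold: "m \<noteq> (\<lambda>_. 0) \<Longrightarrow> fin_multi_index m \<Longrightarrow> PP d m =
  fact (mabs m + d) / (real (mfact m) * fact d)
           + (\<Sum>w\<in>{w. w \<le> m \<and> w \<noteq> m}. PP d w * fact (mabs m - mabs w + 1))"
  by (subst PP.simps) simp

declare PP.simps [simp del]

lemma mfact_pos: "mfact m \<ge> 1"
  unfolding mfact_def by (simp add: Suc_le_eq prod_pos)

lemma tau_split: "n \<ge> 1 \<Longrightarrow> real (tau n) = real (n + 1) + (\<Sum>j\<in>{1..<n}. real ((n - j + 1) * tau j))"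
proof -
  assume "n \<ge> 1"
  then obtain k where k: "n = Suc k" by (metis Suc_le_D One_nat_def)
  have e: "{..<n} = insert 0 {1..<n}" using k by auto
  have "tau n = (\<Sum>j<n. (n - j + 1) * tau j)" using k by (simp only: tau.simps)
  also have "\<dots> = (n + 1) + (\<Sum>j\<in>{1..<n}. (n - j + 1) * tau j)"
    unfolding e by simp
  finally have "tau n = (n + 1) + (\<Sum>j\<in>{1..<n}. (n - j + 1) * tau j)" .
  then show ?thesis by simp
qed

lemma main:
  fixes d :: nat
  assumes "d \<ge> 1"
  shows "fin_multi_index m \<Longrightarrow> PP d m \<le> 2 * real (tau (mabs m)) * fact (mabs m + d - 1) / fact (d - 1)"
proof (induction "mabs m" arbitrary: m rule: less_induct)
  case less
  obtain e where de: "d = Suc e" using assms not0_implies_Suc by fastforce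
  show ?case
  proof (cases "m = (\<lambda>_. 0)")
    case True
    then show ?thesis by (simp add: PP_zero mabs_zero de)
  next
    case False
    define n where "n = mabs m"
    define A' where "A' = {w. w \<le> m \<and> w \<noteq> m \<and> w \<noteq> (\<lambda>_. 0)}"
    define K :: real where "K = fact (n + e) / fact e"
    have n1: "n \<ge> 1" using emb_zero[OF less.prems] False n_def by fastforce
    have finA: "finite {w. w \<le> m \<and> w \<noteq> m}" using finite_below[OF less.prems] by (rule finite_subset[rotated]) auto
    have finA': "finite A'" using finite_below[OF less.prems] unfolding A'_def by (rule finite_subset[rotated]) auto
    have Aeq: "{w. w \<le> m \<and> w \<noteq> m} = insert (\<lambda>_. 0) A'"
      using False unfolding A'_def by (auto simp: le_fun_def)
    have zA: "(\<lambda>_. 0) \<notin> A'" unfolding A'_def by simp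
    let ?g = "\<lambda>w. PP d w * fact (n - mabs w + 1)"
    have sumA: "(\<Sum>w\<in>{w. w \<le> m \<and> w \<noteq> m}. ?g w) = fact (n + 1) + (\<Sum>w\<in>A'. ?g w)"
      unfolding Aeq using finA' zA by (simp add: PP_zero mabs_zero)
    have img: "mabs ` A' \<subseteq> {1..<n}"
    proof
      fix x assume "x \<in> mabs ` A'"
      then obtain w where w: "w \<in> A'" "x = mabs w" by auto
      have fw: "fin_multi_index w" using w fin_le less.prems unfolding A'_def by auto
      have "mabs w < n" using w mabs_less[OF less.prems] unfolding A'_def n_def by auto
      moreover have "mabs w \<noteq> 0" using emb_zero[OF fw] w unfolding A'_def by auto
      ultimately show "x \<in> {1..<n}" using w by auto
    qed
    have grp: "(\<Sum>w\<in>A'. ?g w) = (\<Sum>j\<in>{1..<n}. \<Sum>w\<in>{w \<in> A'. mabs w = j}. ?g w)"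
      using sum.group[OF finA' _ img, of ?g] by simp
    have Bj: "(\<Sum>w\<in>{w \<in> A'. mabs w = j}. ?g w) \<le> 2 * real ((n - j + 1) * tau j) * K"
      if j: "j \<in> {1..<n}" for j
    proof -
      define c :: real where "c = 2 * real (tau j) * fact (j + e) / fact e * fact (n - j + 1)"
      have c0: "c \<ge> 0" unfolding c_def by simp
      have "(\<Sum>w\<in>{w \<in> A'. mabs w = j}. ?g w) \<le> (\<Sum>w\<in>{w \<in> A'. mabs w = j}. c)"
      proof (rule sum_mono)
        fix w assume w: "w \<in> {w \<in> A'. mabs w = j}"
        have fw: "fin_multi_index w" using w fin_le less.prems unfolding A'_def by auto
        have "mabs w < mabs m" using w mabs_less[OF less.prems] unfolding A'_def by auto
        then have "PP d w \<le> 2 * real (tau (mabs w)) * fact (mabs w + d - 1) / fact (d - 1)"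
          using less.hyps fw by blast
        then have "PP d w \<le> 2 * real (tau j) * fact (j + e) / fact e" using w de by simp
        then have "?g w \<le> (2 * real (tau j) * fact (j + e) / fact e) * fact (n - mabs w + 1)"
          by (intro mult_right_mono) auto
        then show "?g w \<le> c" unfolding c_def using w by simp
      qed
      also have "\<dots> = real (card {w \<in> A'. mabs w = j}) * c" by simp
      also have "\<dots> \<le> real (n choose j) * c"
      proof (rule mult_right_mono[OF _ c0])
        have "{w \<in> A'. mabs w = j} = {w. w \<le> m \<and> (w \<noteq> m \<and> w \<noteq> (\<lambda>_. 0)) \<and> mabs w = j}"
          unfolding A'_def by auto
        then show "real (card {w \<in> A'. mabs w = j}) \<le> real (n choose j)"
          using card_level[OF less.prems, of "\<lambda>w. w \<noteq> m \<and> w \<noteq> (\<lambda>_. 0)" j] n_def by simp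
      qed
      also have "\<dots> = 2 * real (tau j) / fact e * real ((n choose j) * fact (j + e) * fact (n - j + 1))"
        unfolding c_def by (simp only: of_nat_mult of_nat_fact mult_ac divide_inverse)
      also have "\<dots> \<le> 2 * real (tau j) / fact e * real ((n - j + 1) * fact (n + e))"
      proof (rule mult_left_mono)
        have jn: "j \<le> n" using j by simp
        show "real ((n choose j) * fact (j + e) * fact (n - j + 1)) \<le> real ((n - j + 1) * fact (n + e))"
          unfolding of_nat_le_iff by (rule choose_ineq[OF jn])
      qed simp
      also have "\<dots> = 2 * real ((n - j + 1) * tau j) * K"
        unfolding K_def by (simp only: of_nat_mult of_nat_fact mult_ac divide_inverse)
      finally show ?thesis .
    qed
    have S: "(\<Sum>w\<in>A'. ?g w) \<le> (\<Sum>j\<in>{1..<n}. 2 * real ((n - j + 1) * tau j) * K)"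
      unfolding grp by (rule sum_mono) (rule Bj)
    have a: "fact (n + d) / (real (mfact m) * fact d) \<le> real (n + 1) * K"
    proof -
      have "fact (n + d) / (real (mfact m) * fact d) \<le> fact (n + d) / (1 * fact d)"
        using mfact_pos[of m] by (intro divide_left_mono) auto
      also have "\<dots> \<le> real (n + 1) * K"
      proof -
        have nat: "fact (n + d) * fact e \<le> (n + 1) * fact (n + e) * (fact d :: nat)"
        proof -
          have "fact (n + d) * fact e = (n + e + 1) * (fact (n + e) * (fact e :: nat))" by (simp add: de algebra_simps)
          also have "\<dots> \<le> ((n + 1) * (e + 1)) * (fact (n + e) * fact e)"
            by (rule mult_le_mono1) simp
          also have "\<dots> = (n + 1) * fact (n + e) * fact d" by (simp add: de algebra_simps)
          finally show ?thesis .
        qed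
        have "real (fact (n + d) * fact e) \<le> real ((n + 1) * fact (n + e) * fact d)"
          using nat by (simp only: of_nat_le_iff)
        then have r: "(fact (n + d) :: real) * fact e \<le> real (n + 1) * fact (n + e) * fact d"
          by (simp only: of_nat_mult of_nat_fact)
        have pe: "(fact e :: real) > 0" "(fact d :: real) > 0" by simp_all
        show ?thesis unfolding K_def using r pe
          by (simp add: divide_simps mult_ac)
      qed
      finally show ?thesis .
    qed
    have b: "(fact (n + 1) :: real) \<le> real (n + 1) * K"
    proof -
      have "fact n * fact e \<le> (fact (n + e) :: nat)" using fact_ineq[of 0 n e] by simp
      then have "real (fact n * fact e) \<le> real (fact (n + e))" by (simp only: of_nat_le_iff)
      then have "(fact n :: real) \<le> K" unfolding K_def by (simp add: field_simps)
      then show ?thesis by (simp add: mult_left_mono)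
    qed
    have "PP d m = fact (n + d) / (real (mfact m) * fact d) + fact (n + 1) + (\<Sum>w\<in>A'. ?g w)"
      using PP_unfold[OF False less.prems, of d] sumA n_def by simp
    also have "\<dots> \<le> 2 * real (n + 1) * K + (\<Sum>j\<in>{1..<n}. 2 * real ((n - j + 1) * tau j) * K)"
      using a b S by linarith
    also have "\<dots> = 2 * real (tau n) * K"
      using tau_split[OF n1] by (simp add: sum_distrib_left sum_distrib_right algebra_simps)
    also have "\<dots> = 2 * real (tau (mabs m)) * fact (mabs m + d - 1) / fact (d - 1)"
      unfolding K_def n_def by (simp add: de)
    finally show ?thesis .
  qed
qed

theorem lemmaA7:
  fixes d :: nat and m :: "nat \<Rightarrow> nat"
  assumes "d \<ge> 1"
    and "fin_multi_index m"
    and "m \<noteq> (\<lambda>_. 0)"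
  shows "PP d m \<le> 2 * real (tau (mabs m)) * fact (mabs m + d - 1) / fact (d - 1)"
  using main[OF assms(1) assms(2)] .

end
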